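(* Let $\mathcal G$ be a braided stability groupoid and $l,m,n$ objects of $U\mathcal G$. Then the map $\mathrm{Hom}(m,l\oplus m)\to\mathrm{Hom}(m\oplus n,l\oplus m\oplus n)$, $\psi\mapsto\psi\oplus\mathrm{id}_n$, is injective, and its image is $\{\chi\in\mathrm{Hom}(m\oplus n,l\oplus m\oplus n)\mid\chi\circ(\iota_m\oplus\mathrm{id}_n)=\iota_{l\oplus m}\oplus\mathrm{id}_n\}$.
   Context: Stability groupoid: a monoidal groupoid $(\mathcal G,\oplus,0)$ with objects $(\mathbb N,+,0)$, $G_n=\mathrm{Aut}(n)$, such that $\oplus\colon G_m\times G_n\to G_{m+n}$ is injective, $G_0$ is trivial, and $(G_{l+m}\times1)\cap(1\times G_{m+n})=1\times G_m\times1$ in $G_{l+m+n}$; braided: equipped with a braiding $b_{m,n}\in G_{m+n}$ of the monoidal groupoid. $U\mathcal G$: objects $\mathbb N$, $\mathrm{Hom}(m,n)=G_n/G_{n-m}$ for $m\le n$ ($G_{n-m}\subset G_n$ via $g\mapsto g\oplus\mathrm{id}_m$), empty otherwise; composition $fG_l\circ gG_m=f(\mathrm{id}_l\oplus g)G_{l+m}$; monoidal structure $f_1G_{m_1}\oplus f_2G_{m_2}=(f_1\oplus f_2)(\mathrm{id}_{m_1}\oplus b^{-1}_{n_1,m_2}\oplus\mathrm{id}_{n_2})G_{m_1+m_2}$ for $f_jG_{m_j}\colon n_j\to m_j+n_j$. The unit $0$ is initial; $\iota_m\colon0\to m$ is the unique morphism. *)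

theory Defs
  imports "HOL-Algebra.Coset"
begin

text \<open>A braided stability groupoid: groups G n = Aut(n) for objects n of (nat,+,0),
  a strict monoidal product t m n : G m x G n -> G (m+n), and a braiding b m n in G (m+n).
  Composition in each G n is the group multiplication (f \<otimes> g = f after g).\<close>

locale braided_stability_groupoid =
  fixes G :: "nat \<Rightarrow> 'g monoid"
    and t :: "nat \<Rightarrow> nat \<Rightarrow> 'g \<Rightarrow> 'g \<Rightarrow> 'g"
    and b :: "nat \<Rightarrow> nat \<Rightarrow> 'g"
  assumes grp: "\<And>n. group (G n)"
    and t_closed: "\<And>m n f g. f \<in> carrier (G m) \<Longrightarrow> g \<in> carrier (G n)
        \<Longrightarrow> t m n f g \<in> carrier (G (m+n))"
    and t_mult: "\<And>m n f f' g g'. f \<in> carrier (G m) \<Longrightarrow> f' \<in> carrier (G m)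
        \<Longrightarrow> g \<in> carrier (G n) \<Longrightarrow> g' \<in> carrier (G n)
        \<Longrightarrow> t m n (f \<otimes>\<^bsub>G m\<^esub> f') (g \<otimes>\<^bsub>G n\<^esub> g')
            = t m n f g \<otimes>\<^bsub>G (m+n)\<^esub> t m n f' g'"
    and t_one: "\<And>m n. t m n \<one>\<^bsub>G m\<^esub> \<one>\<^bsub>G n\<^esub> = \<one>\<^bsub>G (m+n)\<^esub>"
    and t_assoc: "\<And>l m n f g h. f \<in> carrier (G l) \<Longrightarrow> g \<in> carrier (G m)
        \<Longrightarrow> h \<in> carrier (G n)
        \<Longrightarrow> t (l+m) n (t l m f g) h = t l (m+n) f (t m n g h)"
    and t_unit_left: "\<And>n g. g \<in> carrier (G n) \<Longrightarrow> t 0 n \<one>\<^bsub>G 0\<^esub> g = g"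
    and t_unit_right: "\<And>m f. f \<in> carrier (G m) \<Longrightarrow> t m 0 f \<one>\<^bsub>G 0\<^esub> = f"
    and t_inj: "\<And>m n. inj_on (\<lambda>(f, g). t m n f g) (carrier (G m) \<times> carrier (G n))"
    and G0_trivial: "carrier (G 0) = {\<one>\<^bsub>G 0\<^esub>}"
    and intersection: "\<And>l m n.
        (\<lambda>g. t (l+m) n g \<one>\<^bsub>G n\<^esub>) ` carrier (G (l+m))
        \<inter> (\<lambda>g. t l (m+n) \<one>\<^bsub>G l\<^esub> g) ` carrier (G (m+n))
        = (\<lambda>g. t l (m+n) \<one>\<^bsub>G l\<^esub> (t m n g \<one>\<^bsub>G n\<^esub>)) ` carrier (G m)"
    and b_closed: "\<And>m n. b m n \<in> carrier (G (m+n))"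
    and b_natural: "\<And>m n f g. f \<in> carrier (G m) \<Longrightarrow> g \<in> carrier (G n)
        \<Longrightarrow> b m n \<otimes>\<^bsub>G (m+n)\<^esub> t m n f g = t n m g f \<otimes>\<^bsub>G (m+n)\<^esub> b m n"
    and hexagon1: "\<And>l m n. b l (m+n)
        = t m (l+n) \<one>\<^bsub>G m\<^esub> (b l n) \<otimes>\<^bsub>G (l+m+n)\<^esub> t (l+m) n (b l m) \<one>\<^bsub>G n\<^esub>"
    and hexagon2: "\<And>l m n. b (l+m) n
        = t (l+n) m (b l n) \<one>\<^bsub>G m\<^esub> \<otimes>\<^bsub>G (l+m+n)\<^esub> t l (m+n) \<one>\<^bsub>G l\<^esub> (b m n)"

definition stab :: "(nat \<Rightarrow> 'g monoid) \<Rightarrow> (nat \<Rightarrow> nat \<Rightarrow> 'g \<Rightarrow> 'g \<Rightarrow> 'g) \<Rightarrow> nat \<Rightarrow> nat \<Rightarrow> 'g set" where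
  "stab G t k j = (\<lambda>g. t k j g \<one>\<^bsub>G j\<^esub>) ` carrier (G k)"

text \<open>Hom(m,n) in UG: left cosets f G_{n-m} in G_n for m \<le> n, empty otherwise.\<close>
definition UHom :: "(nat \<Rightarrow> 'g monoid) \<Rightarrow> (nat \<Rightarrow> nat \<Rightarrow> 'g \<Rightarrow> 'g \<Rightarrow> 'g) \<Rightarrow> nat \<Rightarrow> nat \<Rightarrow> 'g set set" where
  "UHom G t m n = (if m \<le> n then (\<lambda>f. f <#\<^bsub>G n\<^esub> stab G t (n - m) m) ` carrier (G n) else {})"

definition Uid :: "(nat \<Rightarrow> 'g monoid) \<Rightarrow> (nat \<Rightarrow> nat \<Rightarrow> 'g \<Rightarrow> 'g \<Rightarrow> 'g) \<Rightarrow> nat \<Rightarrow> 'g set" where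
  "Uid G t n = \<one>\<^bsub>G n\<^esub> <#\<^bsub>G n\<^esub> stab G t 0 n"

text \<open>The unique morphism 0 \<rightarrow> m.\<close>
definition Uiota :: "(nat \<Rightarrow> 'g monoid) \<Rightarrow> (nat \<Rightarrow> nat \<Rightarrow> 'g \<Rightarrow> 'g \<Rightarrow> 'g) \<Rightarrow> nat \<Rightarrow> 'g set" where
  "Uiota G t m = (THE X. X \<in> UHom G t 0 m)"

text \<open>Composition Y \<circ> X for X : k \<rightarrow> j, Y : j \<rightarrow> i:
  f G_{i-j} \<circ> g G_{j-k} = f (id_{i-j} \<oplus> g) G_{i-k}; written representative-independently.\<close>
definition UComp :: "(nat \<Rightarrow> 'g monoid) \<Rightarrow> (nat \<Rightarrow> nat \<Rightarrow> 'g \<Rightarrow> 'g \<Rightarrow> 'g)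
    \<Rightarrow> nat \<Rightarrow> nat \<Rightarrow> nat \<Rightarrow> 'g set \<Rightarrow> 'g set \<Rightarrow> 'g set" where
  "UComp G t k j i Y X =
     (\<Union>f\<in>Y. \<Union>g\<in>X. (f \<otimes>\<^bsub>G i\<^esub> t (i - j) j \<one>\<^bsub>G (i - j)\<^esub> g) <#\<^bsub>G i\<^esub> stab G t (i - k) k)"

text \<open>Monoidal product of X1 : n1 \<rightarrow> m1+n1 and X2 : n2 \<rightarrow> m2+n2:
  (f1 \<oplus> f2)(id_{m1} \<oplus> b^{-1}_{n1,m2} \<oplus> id_{n2}) G_{m1+m2}.\<close>
definition UTensor :: "(nat \<Rightarrow> 'g monoid) \<Rightarrow> (nat \<Rightarrow> nat \<Rightarrow> 'g \<Rightarrow> 'g \<Rightarrow> 'g) \<Rightarrow> (nat \<Rightarrow> nat \<Rightarrow> 'g)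
    \<Rightarrow> nat \<Rightarrow> nat \<Rightarrow> nat \<Rightarrow> nat \<Rightarrow> 'g set \<Rightarrow> 'g set \<Rightarrow> 'g set" where
  "UTensor G t b n1 m1 n2 m2 X1 X2 =
     (\<Union>f1\<in>X1. \<Union>f2\<in>X2.
        (t (m1+n1) (m2+n2) f1 f2 \<otimes>\<^bsub>G (m1+n1+m2+n2)\<^esub>
          t m1 (n1+m2+n2) \<one>\<^bsub>G m1\<^esub>
            (t (n1+m2) n2 (inv\<^bsub>G (n1+m2)\<^esub> (b n1 m2)) \<one>\<^bsub>G n2\<^esub>))
        <#\<^bsub>G (m1+n1+m2+n2)\<^esub> stab G t (m1+m2) (n1+n2))"

end

theory Submission
  imports Defs
begin

context braided_stability_groupoid begin

lemma one_c[simp]: "\<one>\<^bsub>G n\<^esub> \<in> carrier (G n)"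
proof - interpret K: group "G n" by (rule grp) show ?thesis by simp qed

lemma stab_sub: "subgroup (stab G t k j) (G (k+j))"
proof -
  have "group_hom (G k) (G (k+j)) (\<lambda>g. t k j g \<one>\<^bsub>G j\<^esub>)"
  proof (intro group_hom.intro grp group_hom_axioms.intro homI)
    fix x y assume xy: "x \<in> carrier (G k)" "y \<in> carrier (G k)"
    show "t k j (x \<otimes>\<^bsub>G k\<^esub> y) \<one>\<^bsub>G j\<^esub> = t k j x \<one>\<^bsub>G j\<^esub> \<otimes>\<^bsub>G (k+j)\<^esub> t k j y \<one>\<^bsub>G j\<^esub>"
    proof - interpret K: group "G j" by (rule grp)
      show ?thesis using t_mult[of x k y "\<one>\<^bsub>G j\<^esub>" j "\<one>\<^bsub>G j\<^esub>"] using xy by simp qed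
  qed (simp add: t_closed)
  thus ?thesis unfolding stab_def by (rule group_hom.img_is_subgroup)
qed

lemma stab_mem: "g \<in> carrier (G k) \<Longrightarrow> t k j g \<one>\<^bsub>G j\<^esub> \<in> stab G t k j"
  unfolding stab_def by blast

lemma stab_0n: "stab G t 0 n = {\<one>\<^bsub>G n\<^esub>}"
  unfolding stab_def using G0_trivial t_one[of 0 n] by simp

lemma Uid_eq: "Uid G t n = {\<one>\<^bsub>G n\<^esub>}"
proof - interpret K: group "G n" by (rule grp)
  show ?thesis unfolding Uid_def stab_0n l_coset_def by simp qed

lemma stab_m0: "stab G t m 0 = carrier (G m)"
  unfolding stab_def using t_unit_right by simp

lemma UHom0: "UHom G t 0 m = {carrier (G m)}"
proof -
  have "\<And>f. f \<in> carrier (G m) \<Longrightarrow> f <#\<^bsub>G m\<^esub> carrier (G m) = carrier (G m)"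
    using group.coset_join3[OF grp] group.subgroup_self[OF grp] by blast
  thus ?thesis unfolding UHom_def stab_m0 by (auto simp: image_iff) (metis one_c)
qed

lemma Uiota_eq: "Uiota G t m = carrier (G m)"
  unfolding Uiota_def UHom0 by simp

lemma b0[simp]: "b l 0 = \<one>\<^bsub>G l\<^esub>"
proof -
  interpret K: group "G l" by (rule grp)
  have bc: "b l 0 \<in> carrier (G l)" using b_closed[of l 0] by simp
  have "b l 0 = b l 0 \<otimes>\<^bsub>G l\<^esub> b l 0"
    using hexagon1[of l 0 0] t_unit_left[OF bc] t_unit_right[OF bc] by simp
  thus ?thesis using K.l_cancel_one[OF bc bc] bc by simp
qed

lemma tensor0:
  assumes "X \<subseteq> carrier (G (m1+n1))"
  shows "UTensor G t b n1 m1 n2 0 X (Uid G t n2)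
     = (\<Union>f\<in>X. t (m1+n1) n2 f \<one>\<^bsub>G n2\<^esub> <#\<^bsub>G (m1+n1+n2)\<^esub> stab G t m1 (n1+n2))"
proof -
  interpret K: group "G (m1+n1+n2)" by (rule grp)
  have tw: "t m1 (n1+n2) \<one>\<^bsub>G m1\<^esub> (t n1 n2 (inv\<^bsub>G n1\<^esub> \<one>\<^bsub>G n1\<^esub>) \<one>\<^bsub>G n2\<^esub>) = \<one>\<^bsub>G (m1+n1+n2)\<^esub>"
  proof - interpret L: group "G n1" by (rule grp)
    show ?thesis using t_one by (simp add: add.assoc) qed
  have "t (m1+n1) n2 f \<one>\<^bsub>G n2\<^esub> \<in> carrier (G (m1+n1+n2))" if "f \<in> X" for f
    using t_closed[of f "m1+n1" "\<one>\<^bsub>G n2\<^esub>" n2] assms that by auto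
  hence r1: "\<And>f. f \<in> X \<Longrightarrow> t (m1+n1) n2 f \<one>\<^bsub>G n2\<^esub> \<otimes>\<^bsub>G (m1+n1+n2)\<^esub> \<one>\<^bsub>G (m1+n1+n2)\<^esub> = t (m1+n1) n2 f \<one>\<^bsub>G n2\<^esub>"
    by (simp only: K.r_one)
  thus ?thesis unfolding UTensor_def Uid_eq
    apply (simp only: add_0_right add_0 b0 tw UN_insert UN_empty Un_empty_right) 
    apply (rule SUP_cong, rule refl)
    using r1 by simp
qed


lemma union_const: "A \<noteq> {} \<Longrightarrow> (\<And>x. x \<in> A \<Longrightarrow> F x = C) \<Longrightarrow> (\<Union>x\<in>A. F x) = C"
  by auto

lemma UHom1: "UHom G t m (l+m) = (\<lambda>f. f <#\<^bsub>G (l+m)\<^esub> stab G t l m) ` carrier (G (l+m))"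
  by (simp add: UHom_def)

lemma UHom2: "UHom G t (m+n) (l+m+n) = (\<lambda>f. f <#\<^bsub>G (l+m+n)\<^esub> stab G t l (m+n)) ` carrier (G (l+m+n))"
proof -
  have e: "l+m+n-(m+n) = l" by simp
  show ?thesis unfolding UHom_def e by simp
qed

lemma UComp_eq: "UComp G t n (m+n) (l+m+n) Y X =
   (\<Union>f\<in>Y. \<Union>g\<in>X. (f \<otimes>\<^bsub>G (l+m+n)\<^esub> t l (m+n) \<one>\<^bsub>G l\<^esub> g) <#\<^bsub>G (l+m+n)\<^esub> stab G t (l+m) n)"
proof -
  have e1: "l+m+n-(m+n) = l" by simp
  have e2: "l+m+n-n = l+m" by simp
  show ?thesis unfolding UComp_def e1 e2 ..
qed

lemma kid: "h \<in> carrier (G l) \<Longrightarrow> t l (m+n) h \<one>\<^bsub>G (m+n)\<^esub> = t (l+m) n (t l m h \<one>\<^bsub>G m\<^esub>) \<one>\<^bsub>G n\<^esub>"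
  using t_assoc[of h l "\<one>\<^bsub>G m\<^esub>" m "\<one>\<^bsub>G n\<^esub>" n] t_one[of m n] by simp

lemma kid2: "g \<in> carrier (G m) \<Longrightarrow> t l (m+n) \<one>\<^bsub>G l\<^esub> (t m n g \<one>\<^bsub>G n\<^esub>) = t (l+m) n (t l m \<one>\<^bsub>G l\<^esub> g) \<one>\<^bsub>G n\<^esub>"
  using t_assoc[of "\<one>\<^bsub>G l\<^esub>" l g m "\<one>\<^bsub>G n\<^esub>" n] by simp

lemma shift:
  assumes f: "f \<in> carrier (G (l+m))" and h: "h \<in> carrier (G l)"
  shows "t (l+m) n (f \<otimes>\<^bsub>G (l+m)\<^esub> t l m h \<one>\<^bsub>G m\<^esub>) \<one>\<^bsub>G n\<^esub>
     = t (l+m) n f \<one>\<^bsub>G n\<^esub> \<otimes>\<^bsub>G (l+m+n)\<^esub> t l (m+n) h \<one>\<^bsub>G (m+n)\<^esub>"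
proof -
  interpret N: group "G n" by (rule grp)
  have hc: "t l m h \<one>\<^bsub>G m\<^esub> \<in> carrier (G (l+m))" using t_closed[of h l "\<one>\<^bsub>G m\<^esub>" m] h by simp
  show ?thesis using t_mult[OF f hc N.one_closed N.one_closed] kid[OF h] by simp
qed

lemma sS: "subgroup (stab G t l (m+n)) (G (l+m+n))"
  using stab_sub[of l "m+n"] by (simp add: add.assoc)

lemma S_sub_H: "h \<in> carrier (G l) \<Longrightarrow> t l (m+n) h \<one>\<^bsub>G (m+n)\<^esub> \<in> stab G t (l+m) n"
  using kid stab_mem t_closed[of h l "\<one>\<^bsub>G m\<^esub>" m] by simp

lemma SH: "stab G t l (m+n) \<subseteq> stab G t (l+m) n"
  using S_sub_H unfolding stab_def by blast

lemma Y_H: "y \<in> stab G t m n \<Longrightarrow> t l (m+n) \<one>\<^bsub>G l\<^esub> y \<in> stab G t (l+m) n"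
  unfolding stab_def[of G t m n] using kid2 stab_mem t_closed[of "\<one>\<^bsub>G l\<^esub>" l _ m] by auto

lemma phi:
  assumes f: "f \<in> carrier (G (l+m))"
  shows "UTensor G t b m l n 0 (f <#\<^bsub>G (l+m)\<^esub> stab G t l m) (Uid G t n)
     = t (l+m) n f \<one>\<^bsub>G n\<^esub> <#\<^bsub>G (l+m+n)\<^esub> stab G t l (m+n)"
proof -
  interpret K: group "G (l+m+n)" by (rule grp)
  interpret L: group "G (l+m)" by (rule grp)
  have s1: "subgroup (stab G t l m) (G (l+m))" by (rule stab_sub)
  have cs: "f <#\<^bsub>G (l+m)\<^esub> stab G t l m \<subseteq> carrier (G (l+m))"
    using L.l_coset_subset_G[OF subgroup.subset[OF s1] f] .
  have c: "t (l+m) n f \<one>\<^bsub>G n\<^esub> \<in> carrier (G (l+m+n))" using t_closed f by simp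
  have "f \<in> f <#\<^bsub>G (l+m)\<^esub> stab G t l m"
    using subgroup.one_closed[OF s1] f unfolding l_coset_def by force
  hence ne: "f <#\<^bsub>G (l+m)\<^esub> stab G t l m \<noteq> {}" by blast
  have each: "t (l+m) n f' \<one>\<^bsub>G n\<^esub> <#\<^bsub>G (l+m+n)\<^esub> stab G t l (m+n)
      = t (l+m) n f \<one>\<^bsub>G n\<^esub> <#\<^bsub>G (l+m+n)\<^esub> stab G t l (m+n)"
    if f': "f' \<in> f <#\<^bsub>G (l+m)\<^esub> stab G t l m" for f'
  proof -
    obtain h where h: "h \<in> carrier (G l)" and fe: "f' = f \<otimes>\<^bsub>G (l+m)\<^esub> t l m h \<one>\<^bsub>G m\<^esub>"
      using f' unfolding l_coset_def stab_def by blast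
    have "t (l+m) n f' \<one>\<^bsub>G n\<^esub> = t (l+m) n f \<one>\<^bsub>G n\<^esub> \<otimes>\<^bsub>G (l+m+n)\<^esub> t l (m+n) h \<one>\<^bsub>G (m+n)\<^esub>"
      using shift[OF f h] fe by simp
    moreover have "t l (m+n) h \<one>\<^bsub>G (m+n)\<^esub> \<in> stab G t l (m+n)" using stab_mem h by simp
    ultimately have "t (l+m) n f' \<one>\<^bsub>G n\<^esub> \<in> t (l+m) n f \<one>\<^bsub>G n\<^esub> <#\<^bsub>G (l+m+n)\<^esub> stab G t l (m+n)"
      unfolding l_coset_def by blast
    from K.l_repr_independence[OF this c sS] show ?thesis by simp
  qed
  show ?thesis using tensor0[of "f <#\<^bsub>G (l+m)\<^esub> stab G t l m" l m n] cs
    by (simp add: union_const[OF ne each])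
qed


lemma Xeq: "UTensor G t b 0 k n 0 (Uiota G t k) (Uid G t n) = stab G t k n"
proof -
  interpret K: group "G (k+n)" by (rule grp)
  have "(\<Union>f\<in>carrier (G k). t k n f \<one>\<^bsub>G n\<^esub> <#\<^bsub>G (k+n)\<^esub> stab G t k n) = stab G t k n"
  proof (rule union_const)
    show "carrier (G k) \<noteq> {}" using one_c by blast
    fix f assume f: "f \<in> carrier (G k)"
    show "t k n f \<one>\<^bsub>G n\<^esub> <#\<^bsub>G (k+n)\<^esub> stab G t k n = stab G t k n"
      by (rule K.coset_join3) (use t_closed f stab_sub stab_mem in simp_all)
  qed
  thus ?thesis using tensor0[of "carrier (G k)" k 0 n] unfolding Uiota_eq by simp
qed

lemma main:
  "inj_on (\<lambda>\<psi>. UTensor G t b m l n 0 \<psi> (Uid G t n)) (UHom G t m (l+m))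
    \<and> (\<lambda>\<psi>. UTensor G t b m l n 0 \<psi> (Uid G t n)) ` UHom G t m (l+m)
      = {\<chi> \<in> UHom G t (m+n) (l+m+n).
          UComp G t n (m+n) (l+m+n) \<chi> (UTensor G t b 0 m n 0 (Uiota G t m) (Uid G t n))
          = UTensor G t b 0 (l+m) n 0 (Uiota G t (l+m)) (Uid G t n)}"
proof -
  interpret K: group "G (l+m+n)" by (rule grp)
  interpret L: group "G (l+m)" by (rule grp)
  define S where "S = stab G t l (m+n)"
  define H where "H = stab G t (l+m) n"
  have sS': "subgroup S (G (l+m+n))" unfolding S_def by (rule sS)
  have sH: "subgroup H (G (l+m+n))" unfolding H_def by (rule stab_sub)
  have s1: "subgroup (stab G t l m) (G (l+m))" by (rule stab_sub)
  have sY: "subgroup (stab G t m n) (G (m+n))" by (rule stab_sub)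
  have SH': "S \<subseteq> H" unfolding S_def H_def by (rule SH)
  have phic: "t (l+m) n f \<one>\<^bsub>G n\<^esub> \<in> carrier (G (l+m+n))" if "f \<in> carrier (G (l+m))" for f
    using t_closed that by simp
  have phiH: "t (l+m) n f \<one>\<^bsub>G n\<^esub> \<in> H" if "f \<in> carrier (G (l+m))" for f
    unfolding H_def using stab_mem that .
  have self: "x \<in> x <#\<^bsub>G (l+m+n)\<^esub> S" if "x \<in> carrier (G (l+m+n))" for x
    using subgroup.one_closed[OF sS'] that unfolding l_coset_def by force
  have inj: "inj_on (\<lambda>\<psi>. UTensor G t b m l n 0 \<psi> (Uid G t n)) (UHom G t m (l+m))"
  proof (rule inj_onI)
    fix x y assume "x \<in> UHom G t m (l+m)" "y \<in> UHom G t m (l+m)"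
      and eq: "UTensor G t b m l n 0 x (Uid G t n) = UTensor G t b m l n 0 y (Uid G t n)"
    then obtain f1 f2 where f1: "f1 \<in> carrier (G (l+m))" and x: "x = f1 <#\<^bsub>G (l+m)\<^esub> stab G t l m"
      and f2: "f2 \<in> carrier (G (l+m))" and y: "y = f2 <#\<^bsub>G (l+m)\<^esub> stab G t l m"
      unfolding UHom1 by blast
    have "t (l+m) n f1 \<one>\<^bsub>G n\<^esub> <#\<^bsub>G (l+m+n)\<^esub> S = t (l+m) n f2 \<one>\<^bsub>G n\<^esub> <#\<^bsub>G (l+m+n)\<^esub> S"
      using eq unfolding x y phi[OF f1] phi[OF f2] S_def .
    hence "t (l+m) n f2 \<one>\<^bsub>G n\<^esub> \<in> t (l+m) n f1 \<one>\<^bsub>G n\<^esub> <#\<^bsub>G (l+m+n)\<^esub> S"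
      using self[OF phic[OF f2]] by simp
    then obtain h where h: "h \<in> carrier (G l)"
      and e: "t (l+m) n f2 \<one>\<^bsub>G n\<^esub> = t (l+m) n f1 \<one>\<^bsub>G n\<^esub> \<otimes>\<^bsub>G (l+m+n)\<^esub> t l (m+n) h \<one>\<^bsub>G (m+n)\<^esub>"
      unfolding l_coset_def S_def stab_def by blast
    have hc: "t l m h \<one>\<^bsub>G m\<^esub> \<in> carrier (G (l+m))" using t_closed[of h l "\<one>\<^bsub>G m\<^esub>" m] h by simp
    have fc: "f1 \<otimes>\<^bsub>G (l+m)\<^esub> t l m h \<one>\<^bsub>G m\<^esub> \<in> carrier (G (l+m))" using f1 hc by simp
    have "t (l+m) n f2 \<one>\<^bsub>G n\<^esub> = t (l+m) n (f1 \<otimes>\<^bsub>G (l+m)\<^esub> t l m h \<one>\<^bsub>G m\<^esub>) \<one>\<^bsub>G n\<^esub>"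
      using e shift[OF f1 h] by simp
    hence "f2 = f1 \<otimes>\<^bsub>G (l+m)\<^esub> t l m h \<one>\<^bsub>G m\<^esub>"
      using inj_onD[OF t_inj[of "l+m" n], of "(f2, \<one>\<^bsub>G n\<^esub>)" "(f1 \<otimes>\<^bsub>G (l+m)\<^esub> t l m h \<one>\<^bsub>G m\<^esub>, \<one>\<^bsub>G n\<^esub>)"]
        f2 fc by simp
    hence "f2 \<in> f1 <#\<^bsub>G (l+m)\<^esub> stab G t l m"
      using stab_mem[OF h, of m] unfolding l_coset_def by blast
    from L.l_repr_independence[OF this f1 s1] show "x = y" unfolding x y .
  qed
  have img: "(\<lambda>\<psi>. UTensor G t b m l n 0 \<psi> (Uid G t n)) ` UHom G t m (l+m)
      = (\<lambda>f. t (l+m) n f \<one>\<^bsub>G n\<^esub> <#\<^bsub>G (l+m+n)\<^esub> S) ` carrier (G (l+m))"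
    unfolding UHom1 image_image S_def using phi by (intro image_cong) simp_all
  have cond: "UComp G t n (m+n) (l+m+n) \<chi> (stab G t m n) = H \<longleftrightarrow>
      (\<exists>f\<in>carrier (G (l+m)). \<chi> = t (l+m) n f \<one>\<^bsub>G n\<^esub> <#\<^bsub>G (l+m+n)\<^esub> S)"
    if chi: "\<chi> \<in> UHom G t (m+n) (l+m+n)" for \<chi>
  proof -
    obtain c where c: "c \<in> carrier (G (l+m+n))" and ch: "\<chi> = c <#\<^bsub>G (l+m+n)\<^esub> S"
      using chi unfolding UHom2 S_def by blast
    have cchi: "c \<in> \<chi>" unfolding ch by (rule self[OF c])
    have y1: "\<one>\<^bsub>G (m+n)\<^esub> \<in> stab G t m n" by (rule subgroup.one_closed[OF sY])
    have t11: "t l (m+n) \<one>\<^bsub>G l\<^esub> \<one>\<^bsub>G (m+n)\<^esub> = \<one>\<^bsub>G (l+m+n)\<^esub>"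
      using t_one[of l "m+n"] by (simp add: add.assoc)
    show ?thesis
    proof
      assume U: "UComp G t n (m+n) (l+m+n) \<chi> (stab G t m n) = H"
      have "(c \<otimes>\<^bsub>G (l+m+n)\<^esub> t l (m+n) \<one>\<^bsub>G l\<^esub> \<one>\<^bsub>G (m+n)\<^esub>) <#\<^bsub>G (l+m+n)\<^esub> H \<subseteq> H"
        using U cchi y1 unfolding UComp_eq H_def by blast
      moreover have "c \<in> (c \<otimes>\<^bsub>G (l+m+n)\<^esub> t l (m+n) \<one>\<^bsub>G l\<^esub> \<one>\<^bsub>G (m+n)\<^esub>) <#\<^bsub>G (l+m+n)\<^esub> H"
        using subgroup.one_closed[OF sH] c unfolding t11 l_coset_def by force
      ultimately have "c \<in> H" by blast
      then obtain f where f: "f \<in> carrier (G (l+m))" and cf: "c = t (l+m) n f \<one>\<^bsub>G n\<^esub>"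
        unfolding H_def stab_def by blast
      show "\<exists>f\<in>carrier (G (l+m)). \<chi> = t (l+m) n f \<one>\<^bsub>G n\<^esub> <#\<^bsub>G (l+m+n)\<^esub> S"
        using f ch cf by blast
    next
      assume "\<exists>f\<in>carrier (G (l+m)). \<chi> = t (l+m) n f \<one>\<^bsub>G n\<^esub> <#\<^bsub>G (l+m+n)\<^esub> S"
      then obtain f where f: "f \<in> carrier (G (l+m))" and chf: "\<chi> = t (l+m) n f \<one>\<^bsub>G n\<^esub> <#\<^bsub>G (l+m+n)\<^esub> S"
        by blast
      have chiH: "\<chi> \<subseteq> H"
        unfolding chf l_coset_def using subgroup.m_closed[OF sH phiH[OF f]] SH' by blast
      have Hc: "H \<subseteq> carrier (G (l+m+n))" by (rule subgroup.subset[OF sH])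
      show "UComp G t n (m+n) (l+m+n) \<chi> (stab G t m n) = H"
        unfolding UComp_eq
      proof (rule union_const)
        show "\<chi> \<noteq> {}" using cchi by blast
        fix x assume x: "x \<in> \<chi>"
        show "(\<Union>g\<in>stab G t m n. (x \<otimes>\<^bsub>G (l+m+n)\<^esub> t l (m+n) \<one>\<^bsub>G l\<^esub> g) <#\<^bsub>G (l+m+n)\<^esub> stab G t (l+m) n) = H"
        proof (rule union_const)
          show "stab G t m n \<noteq> {}" using y1 by blast
          fix g assume g: "g \<in> stab G t m n"
          have "x \<otimes>\<^bsub>G (l+m+n)\<^esub> t l (m+n) \<one>\<^bsub>G l\<^esub> g \<in> H"
            using subgroup.m_closed[OF sH] x chiH Y_H[OF g] unfolding H_def by blast
          thus "(x \<otimes>\<^bsub>G (l+m+n)\<^esub> t l (m+n) \<one>\<^bsub>G l\<^esub> g) <#\<^bsub>G (l+m+n)\<^esub> stab G t (l+m) n = H"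
            unfolding H_def[symmetric] using K.coset_join3 sH Hc by blast
        qed
      qed
    qed
  qed
  have rhs: "{\<chi> \<in> UHom G t (m+n) (l+m+n).
          UComp G t n (m+n) (l+m+n) \<chi> (UTensor G t b 0 m n 0 (Uiota G t m) (Uid G t n))
          = UTensor G t b 0 (l+m) n 0 (Uiota G t (l+m)) (Uid G t n)}
      = (\<lambda>f. t (l+m) n f \<one>\<^bsub>G n\<^esub> <#\<^bsub>G (l+m+n)\<^esub> S) ` carrier (G (l+m))"
  proof -
    have "{\<chi> \<in> UHom G t (m+n) (l+m+n). UComp G t n (m+n) (l+m+n) \<chi> (stab G t m n) = H}
      = (\<lambda>f. t (l+m) n f \<one>\<^bsub>G n\<^esub> <#\<^bsub>G (l+m+n)\<^esub> S) ` carrier (G (l+m))"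
    proof (intro equalityI subsetI)
      fix \<chi> assume "\<chi> \<in> {\<chi> \<in> UHom G t (m+n) (l+m+n). UComp G t n (m+n) (l+m+n) \<chi> (stab G t m n) = H}"
      thus "\<chi> \<in> (\<lambda>f. t (l+m) n f \<one>\<^bsub>G n\<^esub> <#\<^bsub>G (l+m+n)\<^esub> S) ` carrier (G (l+m))"
        using cond by blast
    next
      fix \<chi> assume "\<chi> \<in> (\<lambda>f. t (l+m) n f \<one>\<^bsub>G n\<^esub> <#\<^bsub>G (l+m+n)\<^esub> S) ` carrier (G (l+m))"
      then obtain f where f: "f \<in> carrier (G (l+m))" and chf: "\<chi> = t (l+m) n f \<one>\<^bsub>G n\<^esub> <#\<^bsub>G (l+m+n)\<^esub> S"
        by blast
      have "\<chi> \<in> UHom G t (m+n) (l+m+n)" unfolding UHom2 chf S_def using phic[OF f] by blast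
      thus "\<chi> \<in> {\<chi> \<in> UHom G t (m+n) (l+m+n). UComp G t n (m+n) (l+m+n) \<chi> (stab G t m n) = H}"
        using cond f chf by blast
    qed
    thus ?thesis unfolding Xeq H_def .
  qed
  show ?thesis using inj img rhs by simp
qed

end

theorem proposition4p1:
  fixes G :: "nat \<Rightarrow> 'g monoid"
    and t :: "nat \<Rightarrow> nat \<Rightarrow> 'g \<Rightarrow> 'g \<Rightarrow> 'g"
    and b :: "nat \<Rightarrow> nat \<Rightarrow> 'g"
    and l m n :: nat
  assumes "braided_stability_groupoid G t b"
  shows "inj_on (\<lambda>\<psi>. UTensor G t b m l n 0 \<psi> (Uid G t n)) (UHom G t m (l+m))
    \<and> (\<lambda>\<psi>. UTensor G t b m l n 0 \<psi> (Uid G t n)) ` UHom G t m (l+m)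
      = {\<chi> \<in> UHom G t (m+n) (l+m+n).
          UComp G t n (m+n) (l+m+n) \<chi> (UTensor G t b 0 m n 0 (Uiota G t m) (Uid G t n))
          = UTensor G t b 0 (l+m) n 0 (Uiota G t (l+m)) (Uid G t n)}"
proof -
  interpret braided_stability_groupoid G t b by (rule assms)
  show ?thesis by (rule main)
qed

end
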